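(* Let $d=1$, $X\in\mathbb{R}$ with law $\mathbb{P}_X$, and let the missingness indicator $M\in\{0,1\}$ ($M=0$: observed) satisfy $\mathbb{P}[M=0\mid X]=\mathbb{1}(X\in\mathcal{I})$ for a measurable set $\mathcal{I}\subset\mathbb{R}$ (truncation mechanism); let $\varepsilon=\mathbb{P}[M=1]=\mathbb{P}[X\notin\mathcal{I}]<1$. Assume $\mathbb{P}_X=P_{\theta^*}$ for some $\theta^*\in\Theta$, and let $\theta_\infty^{\mathrm{MMD}}\in\arg\min_{\theta\in\Theta}\mathbb{E}_{M\sim\mathbb{P}_M}\big[\mathbb{D}^2(P_\theta^{(M)},\mathbb{P}_{X\mid M}^{(M)})\big]=\arg\min_{\theta\in\Theta}\mathbb{D}^2(P_\theta,\mathbb{P}_{X\mid M=0})$. Then $$ \mathbb{D}\big(P_{\theta_\infty^{\mathrm{MMD}}},P_{\theta^*}\big)\le 4\varepsilon. $$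
   Context: In expectations over $M$ the empty pattern $M=1$ is excluded, which gives the second expression for $\theta_\infty^{\mathrm{MMD}}$; $\mathbb{P}_{X\mid M=0}$ is the conditional law of $X$ given $M=0$. $\{P_\theta:\theta\in\Theta\}$ is a model on $\mathbb{R}$. $k$ is a positive definite kernel on $\mathbb{R}$ bounded by $1$ and characteristic, with RKHS $\mathcal{H}$, mean embedding $\Phi(Q)=\mathbb{E}_{Y\sim Q}[k(Y,\cdot)]$, MMD $\mathbb{D}(Q_1,Q_2)=\|\Phi(Q_1)-\Phi(Q_2)\|_{\mathcal{H}}$. *)

theory Defs
  imports "HOL-Probability.Probability"
begin

text \<open>The squared MMD is written as the literal
unfolding of the squared RKHS norm of the difference of mean embeddings:
\<open>\<parallel>\<Phi>(P)-\<Phi>(Q)\<parallel>^2 = E k(Y,Y') - 2 E k(Y,Z) + E k(Z,Z')\<close>.\<close>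

definition pos_def_kernel :: "(real \<Rightarrow> real \<Rightarrow> real) \<Rightarrow> bool" where
  "pos_def_kernel k \<longleftrightarrow> (\<forall>x y. k x y = k y x) \<and>
     (\<forall>(n::nat) (c::nat \<Rightarrow> real) (x::nat \<Rightarrow> real).
        (\<Sum>i<n. \<Sum>j<n. c i * c j * k (x i) (x j)) \<ge> 0)"

definition mmd_sq :: "(real \<Rightarrow> real \<Rightarrow> real) \<Rightarrow> real measure \<Rightarrow> real measure \<Rightarrow> real" where
  "mmd_sq k P Q =
     (\<integral>y. (\<integral>y'. k y y' \<partial>P) \<partial>P) - 2 * (\<integral>y. (\<integral>z. k y z \<partial>Q) \<partial>P) + (\<integral>z. (\<integral>z'. k z z' \<partial>Q) \<partial>Q)"

definition mmd :: "(real \<Rightarrow> real \<Rightarrow> real) \<Rightarrow> real measure \<Rightarrow> real measure \<Rightarrow> real" where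
  "mmd k P Q = sqrt (mmd_sq k P Q)"

definition borel_prob :: "real measure \<Rightarrow> bool" where
  "borel_prob P \<longleftrightarrow> prob_space P \<and> sets P = sets borel"

definition characteristic_kernel :: "(real \<Rightarrow> real \<Rightarrow> real) \<Rightarrow> bool" where
  "characteristic_kernel k \<longleftrightarrow>
     (\<forall>P Q. borel_prob P \<and> borel_prob Q \<and> mmd k P Q = 0 \<longrightarrow> P = Q)"

end

theory Submission
  imports Defs
begin

lemma int_bound1:
  fixes f :: "'a \<Rightarrow> real"
  assumes "prob_space Q" "f \<in> borel_measurable Q" "\<And>x. \<bar>f x\<bar> \<le> 1"
  shows "\<bar>\<integral>x. f x \<partial>Q\<bar> \<le> 1"
proof -
  interpret prob_space Q by fact
  have "\<bar>\<integral>x. f x \<partial>Q\<bar> \<le> (\<integral>x. \<bar>f x\<bar> \<partial>Q)"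
    using integral_norm_bound[of Q f] by simp
  also have "\<dots> \<le> (\<integral>x. 1 \<partial>Q)"
    using assms by (intro integral_mono integrable_const_bound[where B=1]) auto
  finally show ?thesis using prob_space.prob_space[OF assms(1)] by simp
qed

lemma inner_meas:
  fixes k :: "real \<Rightarrow> real \<Rightarrow> real"
  assumes "case_prod k \<in> borel_measurable (borel \<Otimes>\<^sub>M borel)" "finite_measure Q" "sets Q = sets borel"
  shows "(\<lambda>y. \<integral>z. k y z \<partial>Q) \<in> borel_measurable borel"
proof -
  interpret finite_measure Q by fact
  have "sets (borel \<Otimes>\<^sub>M Q) = sets (borel \<Otimes>\<^sub>M borel)"
    by (rule sets_pair_measure_cong) (simp_all add: assms)
  then have "case_prod k \<in> borel_measurable (borel \<Otimes>\<^sub>M Q)"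
    using assms(1) measurable_cong_sets[OF _ refl] by blast
  then show ?thesis using borel_measurable_lebesgue_integral[of k borel] by simp
qed


lemma pim_pair_distr:
  fixes \<pi> :: "'i \<Rightarrow> real measure"
  assumes fin: "finite I" and P: "\<And>i. i \<in> I \<Longrightarrow> prob_space (\<pi> i)"
    and ab: "a \<in> I" "b \<in> I" "a \<noteq> b"
  shows "distr (PiM I \<pi>) (\<pi> a \<Otimes>\<^sub>M \<pi> b) (\<lambda>x. (x a, x b)) = \<pi> a \<Otimes>\<^sub>M \<pi> b"
proof -
  interpret prob_space "PiM I \<pi>" using P by (intro prob_space_PiM) auto
  have rv: "\<And>i. i \<in> I \<Longrightarrow> random_variable (\<pi> i) (\<lambda>x. x i)" by measurable
  have d1: "distr (PiM I \<pi>) (PiM I \<pi>) (\<lambda>x. \<lambda>i\<in>I. x i) = PiM I \<pi>"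
  proof -
    have "distr (PiM I \<pi>) (PiM I \<pi>) (\<lambda>x. \<lambda>i\<in>I. x i) = distr (PiM I \<pi>) (PiM I \<pi>) (\<lambda>x. x)"
      by (rule distr_cong) (auto simp: space_PiM PiE_restrict)
    then show ?thesis by simp
  qed
  have d2: "(PiM I (\<lambda>i. distr (PiM I \<pi>) (\<pi> i) (\<lambda>x. x i))) = PiM I \<pi>"
    by (rule PiM_cong) (auto intro!: distr_PiM_component P)
  have ind: "indep_vars \<pi> (\<lambda>i x. x i) I"
    using ab d1 d2 by (subst indep_vars_iff_distr_eq_PiM'[OF _ rv]) auto
  have "indep_var (PiM {a} \<pi>) (\<lambda>\<omega>. restrict (\<lambda>i. \<omega> i) {a}) (PiM {b} \<pi>) (\<lambda>\<omega>. restrict (\<lambda>i. \<omega> i) {b})"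
    using ab by (intro indep_var_restrict[OF ind]) auto
  then have "indep_var (\<pi> a) ((\<lambda>f. f a) \<circ> (\<lambda>\<omega>. restrict (\<lambda>i. \<omega> i) {a})) (\<pi> b) ((\<lambda>f. f b) \<circ> (\<lambda>\<omega>. restrict (\<lambda>i. \<omega> i) {b}))"
    by (rule indep_var_compose) (auto intro: measurable_component_singleton)
  then have "indep_var (\<pi> a) (\<lambda>x. x a) (\<pi> b) (\<lambda>x. x b)"
    by (simp add: o_def)
  then have "distr (PiM I \<pi>) (\<pi> a) (\<lambda>x. x a) \<Otimes>\<^sub>M distr (PiM I \<pi>) (\<pi> b) (\<lambda>x. x b) = distr (PiM I \<pi>) (\<pi> a \<Otimes>\<^sub>M \<pi> b) (\<lambda>x. (x a, x b))"
    using indep_var_distribution_eq by blast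
  then show ?thesis using distr_PiM_component[of I \<pi> a, OF P ab(1)] distr_PiM_component[of I \<pi> b, OF P ab(2)] by simp
qed


lemma k_meas_pair:
  fixes k :: "real \<Rightarrow> real \<Rightarrow> real"
  assumes "case_prod k \<in> borel_measurable (borel \<Otimes>\<^sub>M borel)" "sets A = sets borel" "sets B = sets borel"
  shows "case_prod k \<in> borel_measurable (A \<Otimes>\<^sub>M B)"
proof -
  have "sets (A \<Otimes>\<^sub>M B) = sets (borel \<Otimes>\<^sub>M borel)"
    by (rule sets_pair_measure_cong) (simp_all add: assms)
  then show ?thesis using assms(1) measurable_cong_sets[OF _ refl] by blast
qed

lemma k_meas_diag:
  fixes k :: "real \<Rightarrow> real \<Rightarrow> real"
  assumes "case_prod k \<in> borel_measurable (borel \<Otimes>\<^sub>M borel)" "sets A = sets borel"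
  shows "(\<lambda>y. k y y) \<in> borel_measurable A"
proof -
  have "(\<lambda>y. (y, y)) \<in> measurable borel (borel \<Otimes>\<^sub>M borel)" by measurable
  from measurable_comp[OF this assms(1)] have "(\<lambda>y. k y y) \<in> borel_measurable borel" by (simp add: o_def)
  then show ?thesis using measurable_cong_sets[OF assms(2) refl] by blast
qed

lemma B_sym:
  fixes k :: "real \<Rightarrow> real \<Rightarrow> real"
  assumes km: "case_prod k \<in> borel_measurable (borel \<Otimes>\<^sub>M borel)"
    and ks: "\<And>x y. k x y = k y x" and kb: "\<And>x y. \<bar>k x y\<bar> \<le> 1"
    and P: "prob_space P" "sets P = sets borel" and Q: "prob_space Q" "sets Q = sets borel"
  shows "(\<integral>y. (\<integral>z. k y z \<partial>Q) \<partial>P) = (\<integral>y. (\<integral>z. k y z \<partial>P) \<partial>Q)"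
proof -
  interpret P: prob_space P by fact
  interpret Q: prob_space Q by fact
  interpret PQ: pair_sigma_finite P Q by unfold_locales
  interpret PQp: prob_space "P \<Otimes>\<^sub>M Q" by (rule prob_space_pair) unfold_locales
  have int: "integrable (P \<Otimes>\<^sub>M Q) (case_prod k)"
    using kb k_meas_pair[OF km P(2) Q(2)] by (intro PQp.integrable_const_bound[where B=1]) auto
  have "(\<integral>y. (\<integral>x. k x y \<partial>P) \<partial>Q) = (\<integral>x. (\<integral>y. k x y \<partial>Q) \<partial>P)"
    by (rule PQ.Fubini_integral[OF int])
  then show ?thesis using ks by simp
qed

lemma pim_pair_int:
  fixes \<pi> :: "'i \<Rightarrow> real measure" and k :: "real \<Rightarrow> real \<Rightarrow> real"
  assumes fin: "finite I" and P: "\<And>i. i \<in> I \<Longrightarrow> prob_space (\<pi> i)"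
    and S: "\<And>i. i \<in> I \<Longrightarrow> sets (\<pi> i) = sets borel"
    and ab: "a \<in> I" "b \<in> I" "a \<noteq> b"
    and km: "case_prod k \<in> borel_measurable (borel \<Otimes>\<^sub>M borel)" and kb: "\<And>x y. \<bar>k x y\<bar> \<le> 1"
  shows "(\<integral>x. k (x a) (x b) \<partial>PiM I \<pi>) = (\<integral>y. (\<integral>z. k y z \<partial>\<pi> b) \<partial>\<pi> a)"
proof -
  interpret A: prob_space "\<pi> a" using P ab by auto
  interpret B: prob_space "\<pi> b" using P ab by auto
  interpret AB: pair_sigma_finite "\<pi> a" "\<pi> b" by unfold_locales
  interpret ABp: prob_space "\<pi> a \<Otimes>\<^sub>M \<pi> b" by (rule prob_space_pair) unfold_locales
  have kmab: "case_prod k \<in> borel_measurable (\<pi> a \<Otimes>\<^sub>M \<pi> b)"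
    using k_meas_pair[OF km S[OF ab(1)] S[OF ab(2)]] .
  have int: "integrable (\<pi> a \<Otimes>\<^sub>M \<pi> b) (case_prod k)"
    using kb kmab by (intro ABp.integrable_const_bound[where B=1]) auto
  have m: "(\<lambda>x. (x a, x b)) \<in> measurable (PiM I \<pi>) (\<pi> a \<Otimes>\<^sub>M \<pi> b)"
    using ab by measurable
  have "(\<integral>x. k (x a) (x b) \<partial>PiM I \<pi>) = integral\<^sup>L (distr (PiM I \<pi>) (\<pi> a \<Otimes>\<^sub>M \<pi> b) (\<lambda>x. (x a, x b))) (case_prod k)"
    using integral_distr[OF m kmab] by simp
  also have "\<dots> = integral\<^sup>L (\<pi> a \<Otimes>\<^sub>M \<pi> b) (case_prod k)"
    using pim_pair_distr[where \<pi>=\<pi>, OF fin P ab] by simp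
  also have "\<dots> = (\<integral>y. (\<integral>z. k y z \<partial>\<pi> b) \<partial>\<pi> a)"
    using AB.integral_fst'[OF int] by simp
  finally show ?thesis .
qed

lemma pim_diag_int:
  fixes \<pi> :: "'i \<Rightarrow> real measure" and k :: "real \<Rightarrow> real \<Rightarrow> real"
  assumes P: "\<And>i. i \<in> I \<Longrightarrow> prob_space (\<pi> i)"
    and S: "\<And>i. i \<in> I \<Longrightarrow> sets (\<pi> i) = sets borel"
    and a: "a \<in> I"
    and km: "case_prod k \<in> borel_measurable (borel \<Otimes>\<^sub>M borel)"
  shows "(\<integral>x. k (x a) (x a) \<partial>PiM I \<pi>) = (\<integral>y. k y y \<partial>\<pi> a)"
proof -
  have m: "(\<lambda>x. x a) \<in> measurable (PiM I \<pi>) (\<pi> a)"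
    using a by measurable
  have "(\<integral>y. k y y \<partial>\<pi> a) = (\<integral>y. k y y \<partial>distr (PiM I \<pi>) (\<pi> a) (\<lambda>x. x a))"
    using distr_PiM_component[of I \<pi> a, OF P a] by simp
  also have "\<dots> = (\<integral>x. k (x a) (x a) \<partial>PiM I \<pi>)"
    by (rule integral_distr[OF m k_meas_diag[OF km S[OF a]]])
  finally show ?thesis by simp
qed


definition kB :: "(real \<Rightarrow> real \<Rightarrow> real) \<Rightarrow> real measure \<Rightarrow> real measure \<Rightarrow> real" where
  "kB k A B = (\<integral>y. (\<integral>z. k y z \<partial>B) \<partial>A)"

lemma pd_finite_set:
  fixes k :: "real \<Rightarrow> real \<Rightarrow> real" and x :: "'a \<Rightarrow> real" and w :: "'a \<Rightarrow> real"
  assumes pd: "pos_def_kernel k" and S: "finite S"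
  shows "0 \<le> (\<Sum>s\<in>S. \<Sum>t\<in>S. w s * w t * k (x s) (x t))"
proof -
  obtain h where h: "bij_betw h {0..<card S} S" using ex_bij_betw_nat_finite[OF S] by blast
  have "0 \<le> (\<Sum>i<card S. \<Sum>j<card S. w (h i) * w (h j) * k (x (h i)) (x (h j)))"
    using pd unfolding pos_def_kernel_def by force
  also have "\<dots> = (\<Sum>i\<in>{0..<card S}. \<Sum>t\<in>S. w (h i) * w t * k (x (h i)) (x t))"
    using sum.reindex_bij_betw[OF h, of "\<lambda>t. w (h _) * w t * k (x (h _)) (x t)"]
    by (simp add: atLeast0LessThan)
  also have "\<dots> = (\<Sum>s\<in>S. \<Sum>t\<in>S. w s * w t * k (x s) (x t))"
    using sum.reindex_bij_betw[OF h, of "\<lambda>s. \<Sum>t\<in>S. w s * w t * k (x s) (x t)"] by simp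
  finally show ?thesis .
qed

lemma sum_fst_prod:
  fixes f :: "'a \<Rightarrow> real"
  assumes "finite A"
  shows "(\<Sum>s\<in>A \<times> {..<m}. f (fst s)) = real m * (\<Sum>i\<in>A. f i)"
proof -
  have 1: "(\<Sum>i\<in>A. \<Sum>a\<in>{..<m}. f i) = (\<Sum>(i,a)\<in>A \<times> {..<m}. f i)"
    by (rule sum.cartesian_product)
  have 2: "(\<Sum>(i,a)\<in>A \<times> {..<m}. f i) = (\<Sum>s\<in>A \<times> {..<m}. f (fst s))"
    by (simp add: split_def)
  have "(\<Sum>s\<in>A \<times> {..<m}. f (fst s)) = (\<Sum>i\<in>A. \<Sum>a\<in>{..<m}. f i)"
    using 1 2 by simp
  then show ?thesis by (simp add: sum_distrib_left)
qed


lemma kB_bound: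
  fixes k :: "real \<Rightarrow> real \<Rightarrow> real"
  assumes km: "case_prod k \<in> borel_measurable (borel \<Otimes>\<^sub>M borel)" and kb: "\<And>x y. \<bar>k x y\<bar> \<le> 1"
    and A: "prob_space A" "sets A = sets borel" and B: "prob_space B" "sets B = sets borel"
  shows "\<bar>kB k A B\<bar> \<le> 1"
proof -
  have m1: "k y \<in> borel_measurable B" for y
  proof -
    have "(\<lambda>z. (y, z)) \<in> measurable borel (borel \<Otimes>\<^sub>M borel)" by measurable
    from measurable_comp[OF this km] have "k y \<in> borel_measurable borel" by (simp add: o_def)
    then show ?thesis using measurable_cong_sets[OF B(2) refl] by blast
  qed
  have m2: "(\<lambda>y. \<integral>z. k y z \<partial>B) \<in> borel_measurable A"
    using inner_meas[OF km prob_space.finite_measure[OF B(1)] B(2)] measurable_cong_sets[OF A(2) refl] by blast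
  show ?thesis unfolding kB_def
    by (rule int_bound1[OF A(1) m2]) (rule int_bound1[OF B(1) m1 kb])
qed

lemma psd:
  fixes k :: "real \<Rightarrow> real \<Rightarrow> real" and P :: "nat \<Rightarrow> real measure" and c :: "nat \<Rightarrow> real"
  assumes pd: "pos_def_kernel k" and km: "case_prod k \<in> borel_measurable (borel \<Otimes>\<^sub>M borel)"
    and kb: "\<And>x y. \<bar>k x y\<bar> \<le> 1"
    and P: "\<And>i. i < n \<Longrightarrow> prob_space (P i)" and S: "\<And>i. i < n \<Longrightarrow> sets (P i) = sets borel"
  shows "0 \<le> (\<Sum>i<n. \<Sum>j<n. c i * c j * kB k (P i) (P j))"
proof -
  define G where "G = (\<Sum>i<n. \<Sum>j<n. c i * c j * kB k (P i) (P j))"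
  define C where "C = (\<Sum>i<n. (c i)^2)"
  have bnd: "- (2 * C / real m) \<le> G" if m: "m > 0" for m :: nat
  proof -
    define I where "I = {..<n} \<times> {..<m}"
    define \<pi> where "\<pi> = (\<lambda>s::nat\<times>nat. P (fst s))"
    define w where "w = (\<lambda>s::nat\<times>nat. c (fst s) / real m)"
    define D where "D = (\<lambda>i. \<integral>y. k y y \<partial>P i)"
    define Bm where "Bm = (\<lambda>i j. kB k (P i) (P j))"
    have finI: "finite I" unfolding I_def by simp
    have \<pi>P: "\<And>s. s \<in> I \<Longrightarrow> prob_space (\<pi> s)" unfolding I_def \<pi>_def using P by auto
    have \<pi>S: "\<And>s. s \<in> I \<Longrightarrow> sets (\<pi> s) = sets borel" unfolding I_def \<pi>_def using S by auto
    interpret PI: prob_space "PiM I \<pi>" using \<pi>P by (intro prob_space_PiM) auto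
    have intk: "integrable (PiM I \<pi>) (\<lambda>x. k (x s) (x t))" if st: "s \<in> I" "t \<in> I" for s t
    proof -
      have "(\<lambda>x. (x s, x t)) \<in> measurable (PiM I \<pi>) (\<pi> s \<Otimes>\<^sub>M \<pi> t)" using st by measurable
      from measurable_comp[OF this k_meas_pair[OF km \<pi>S[OF st(1)] \<pi>S[OF st(2)]]]
      have "(\<lambda>x. k (x s) (x t)) \<in> borel_measurable (PiM I \<pi>)" by (simp add: o_def)
      then show ?thesis using kb by (intro PI.integrable_const_bound[where B=1]) auto
    qed
    have E: "(\<integral>x. k (x s) (x t) \<partial>PiM I \<pi>) = Bm (fst s) (fst t) + (if s = t then D (fst s) - Bm (fst s) (fst s) else 0)"
      if st: "s \<in> I" "t \<in> I" for s t
    proof (cases "s = t")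
      case True
      then show ?thesis using pim_diag_int[where \<pi>=\<pi>, OF \<pi>P \<pi>S st(1) km] by (simp add: D_def \<pi>_def)
    next
      case False
      then show ?thesis using pim_pair_int[where \<pi>=\<pi>, OF finI \<pi>P \<pi>S st False km kb]
        by (simp add: Bm_def kB_def \<pi>_def)
    qed
    have "0 \<le> (\<integral>x. (\<Sum>s\<in>I. \<Sum>t\<in>I. w s * w t * k (x s) (x t)) \<partial>PiM I \<pi>)"
      using pd_finite_set[OF pd finI] by (intro Bochner_Integration.integral_nonneg) auto
    also have "\<dots> = (\<Sum>s\<in>I. \<Sum>t\<in>I. w s * w t * (\<integral>x. k (x s) (x t) \<partial>PiM I \<pi>))"
      using intk by (simp add: integral_sum integrable_sum)
    also have "\<dots> = (\<Sum>s\<in>I. \<Sum>t\<in>I. w s * w t * Bm (fst s) (fst t)) + (\<Sum>s\<in>I. w s * w s * (D (fst s) - Bm (fst s) (fst s)))"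
    proof -
      have "(\<Sum>t\<in>I. w s * w t * (\<integral>x. k (x s) (x t) \<partial>PiM I \<pi>)) =
            (\<Sum>t\<in>I. w s * w t * Bm (fst s) (fst t)) + w s * w s * (D (fst s) - Bm (fst s) (fst s))"
        if s: "s \<in> I" for s
      proof -
        have "(\<Sum>t\<in>I. w s * w t * (\<integral>x. k (x s) (x t) \<partial>PiM I \<pi>)) =
              (\<Sum>t\<in>I. w s * w t * Bm (fst s) (fst t) + (if s = t then w s * w s * (D (fst s) - Bm (fst s) (fst s)) else 0))"
          using E s by (intro sum.cong) (auto simp: algebra_simps)
        also have "\<dots> = (\<Sum>t\<in>I. w s * w t * Bm (fst s) (fst t)) + w s * w s * (D (fst s) - Bm (fst s) (fst s))"
          using s finI by (simp add: sum.distrib)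
        finally show ?thesis .
      qed
      then show ?thesis by (simp add: sum.distrib)
    qed
    finally have main: "0 \<le> (\<Sum>s\<in>I. \<Sum>t\<in>I. w s * w t * Bm (fst s) (fst t)) + (\<Sum>s\<in>I. w s * w s * (D (fst s) - Bm (fst s) (fst s)))" .
    have first: "(\<Sum>s\<in>I. \<Sum>t\<in>I. w s * w t * Bm (fst s) (fst t)) = G"
    proof -
      have "(\<Sum>t\<in>I. w s * w t * Bm (fst s) (fst t)) = w s * (\<Sum>j<n. c j * Bm (fst s) j)" for s
      proof -
        have "(\<Sum>t\<in>I. w s * w t * Bm (fst s) (fst t)) = w s * (\<Sum>t\<in>I. c (fst t) / real m * Bm (fst s) (fst t))"
          by (simp add: sum_distrib_left w_def algebra_simps)
        also have "\<dots> = w s * (real m * (\<Sum>j<n. c j / real m * Bm (fst s) j))"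
          unfolding I_def by (subst sum_fst_prod[where f="\<lambda>j. c j / real m * Bm (fst s) j"]) auto
        also have "\<dots> = w s * (\<Sum>j<n. c j * Bm (fst s) j)"
          using m by (simp add: sum_distrib_left)
        finally show ?thesis .
      qed
      then have "(\<Sum>s\<in>I. \<Sum>t\<in>I. w s * w t * Bm (fst s) (fst t)) = (\<Sum>s\<in>I. c (fst s) / real m * (\<Sum>j<n. c j * Bm (fst s) j))"
        by (simp add: w_def)
      also have "\<dots> = real m * (\<Sum>i<n. c i / real m * (\<Sum>j<n. c j * Bm i j))"
        unfolding I_def by (subst sum_fst_prod[where f="\<lambda>i. c i / real m * (\<Sum>j<n. c j * Bm i j)"]) auto
      also have "\<dots> = G"
        using m by (simp add: G_def Bm_def sum_distrib_left algebra_simps)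
      finally show ?thesis .
    qed
    have second: "\<bar>\<Sum>s\<in>I. w s * w s * (D (fst s) - Bm (fst s) (fst s))\<bar> \<le> 2 * C / real m"
    proof -
      have "\<bar>\<Sum>s\<in>I. w s * w s * (D (fst s) - Bm (fst s) (fst s))\<bar> \<le> (\<Sum>s\<in>I. \<bar>w s * w s * (D (fst s) - Bm (fst s) (fst s))\<bar>)"
        by (rule sum_abs)
      also have "\<dots> \<le> (\<Sum>s\<in>I. 2 * (c (fst s))^2 / (real m)^2)"
      proof (rule sum_mono)
        fix s assume s: "s \<in> I"
        then have i: "fst s < n" unfolding I_def by auto
        have "\<bar>D (fst s)\<bar> \<le> 1" unfolding D_def
          by (rule int_bound1[OF P[OF i] k_meas_diag[OF km S[OF i]] kb])
        moreover have "\<bar>Bm (fst s) (fst s)\<bar> \<le> 1" unfolding Bm_def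
          by (rule kB_bound[OF km kb P[OF i] S[OF i] P[OF i] S[OF i]])
        ultimately have "\<bar>D (fst s) - Bm (fst s) (fst s)\<bar> \<le> 2" by linarith
        then have "\<bar>w s * w s\<bar> * \<bar>D (fst s) - Bm (fst s) (fst s)\<bar> \<le> \<bar>w s * w s\<bar> * 2"
          by (intro mult_left_mono) auto
        then show "\<bar>w s * w s * (D (fst s) - Bm (fst s) (fst s))\<bar> \<le> 2 * (c (fst s))^2 / (real m)^2"
          by (simp add: abs_mult w_def power2_eq_square mult.commute)
      qed
      also have "\<dots> = real m * (\<Sum>i<n. 2 * (c i)^2 / (real m)^2)"
        unfolding I_def by (rule sum_fst_prod) simp
      also have "\<dots> = 2 * C / real m"
        using m by (simp add: C_def sum_divide_distrib[symmetric] sum_distrib_left[symmetric] power2_eq_square)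
      finally show ?thesis .
    qed
    show ?thesis using main first second by linarith
  qed
  show ?thesis
  proof (rule ccontr)
    assume "\<not> 0 \<le> (\<Sum>i<n. \<Sum>j<n. c i * c j * kB k (P i) (P j))"
    then have G: "G < 0" by (simp add: G_def)
    have C0: "0 \<le> C" unfolding C_def by (simp add: sum_nonneg)
    obtain m :: nat where m: "2 * C / (- G) < real m" using reals_Archimedean2 by blast
    have "0 \<le> 2 * C / (- G)" using C0 G by (intro divide_nonneg_pos) auto
    then have "real m > 0" using m by linarith
    then have mpos: "m > 0" by simp
    have nG: "0 < - G" using G by simp
    have "2 * C < real m * (- G)" using m unfolding pos_divide_less_eq[OF nG] .
    then have "2 * C / real m < - G" using mpos by (simp add: divide_less_eq mult.commute)
    then show False using bnd[OF mpos] by linarith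
  qed
qed


lemma integral_unif:
  fixes f :: "'a \<Rightarrow> real"
  assumes fm: "finite_measure M" and A: "A \<in> sets M" and p: "measure M A > 0" and f: "f \<in> borel_measurable M"
  shows "(\<integral>x. f x \<partial>uniform_measure M A) = (\<integral>x. indicator A x * f x \<partial>M) / measure M A"
proof -
  interpret finite_measure M by fact
  have eq: "(\<lambda>x. indicator A x / emeasure M A) = (\<lambda>x. ennreal (indicator A x / measure M A))"
  proof
    fix x
    show "indicator A x / emeasure M A = ennreal (indicator A x / measure M A)"
    proof (cases "x \<in> A")
      case True
      have "ennreal 1 / ennreal (measure M A) = ennreal (1 / measure M A)"
        using p by (intro divide_ennreal) auto
      then show ?thesis using True by (simp add: emeasure_eq_measure)
    next
      case False
      then show ?thesis by simp
    qed
  qed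
  have "(\<integral>x. f x \<partial>uniform_measure M A) = (\<integral>x. f x \<partial>density M (\<lambda>x. ennreal (indicator A x / measure M A)))"
    unfolding uniform_measure_def eq ..
  also have "\<dots> = (\<integral>x. (indicator A x / measure M A) *\<^sub>R f x \<partial>M)"
    using A p by (intro integral_density f) auto
  also have "\<dots> = (\<integral>x. (indicator A x * f x) / measure M A \<partial>M)"
    by (intro Bochner_Integration.integral_cong) auto
  also have "\<dots> = (\<integral>x. indicator A x * f x \<partial>M) / measure M A"
    by (rule integral_divide_zero)
  finally show ?thesis .
qed

lemma discr:
  fixes a b c :: real
  assumes "\<And>t. 0 \<le> a + 2 * b * t + c * t^2" "0 \<le> a" "0 \<le> c"
  shows "b^2 \<le> a * c"
proof (cases "c = 0")
  case True
  show ?thesis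
  proof (cases "b = 0")
    case False
    have "0 \<le> a + 2 * b * (- (a + 1) / (2 * b))" using assms(1)[of "- (a + 1) / (2 * b)"] True by simp
    also have "\<dots> = -1" using False by (simp add: field_simps)
    finally show ?thesis by simp
  qed (use assms in simp)
next
  case False
  then have c: "c > 0" using assms(3) by simp
  have "0 \<le> a + 2 * b * (- b / c) + c * (- b / c)^2" using assms(1) .
  also have "\<dots> = a - b^2 / c" using c by (simp add: field_simps power2_eq_square)
  finally have "b^2 / c \<le> a" by simp
  then show ?thesis using c by (simp add: divide_le_eq mult.commute)
qed

definition qf :: "real \<Rightarrow> real \<Rightarrow> real \<Rightarrow> real \<Rightarrow> real \<Rightarrow> real \<Rightarrow> real \<Rightarrow> real \<Rightarrow> real \<Rightarrow> real" where
  "qf g00 g11 g22 g01 g02 g12 a b c =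
     a * a * g00 + b * b * g11 + c * c * g22 + 2 * a * b * g01 + 2 * a * c * g02 + 2 * b * c * g12"

lemma tri:
  assumes psd: "\<And>a b c. 0 \<le> qf g00 g11 g22 g01 g02 g12 a b c"
  shows "sqrt (qf g00 g11 g22 g01 g02 g12 (u0 + v0) (u1 + v1) (u2 + v2))
     \<le> sqrt (qf g00 g11 g22 g01 g02 g12 u0 u1 u2) + sqrt (qf g00 g11 g22 g01 g02 g12 v0 v1 v2)"
proof -
  let ?q = "qf g00 g11 g22 g01 g02 g12"
  define bf where "bf = u0 * v0 * g00 + u1 * v1 * g11 + u2 * v2 * g22 + (u0 * v1 + u1 * v0) * g01
     + (u0 * v2 + u2 * v0) * g02 + (u1 * v2 + u2 * v1) * g12"
  have exp: "?q (u0 + t * v0) (u1 + t * v1) (u2 + t * v2) = ?q u0 u1 u2 + 2 * bf * t + ?q v0 v1 v2 * t^2" for t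
    unfolding qf_def bf_def by (simp add: algebra_simps power2_eq_square)
  have cs: "bf^2 \<le> ?q u0 u1 u2 * ?q v0 v1 v2"
    by (rule discr) (use psd exp in \<open>metis\<close>)+
  have "bf \<le> sqrt (?q u0 u1 u2) * sqrt (?q v0 v1 v2)"
  proof -
    have "bf \<le> \<bar>bf\<bar>" by simp
    also have "\<bar>bf\<bar> = sqrt (bf^2)" by simp
    also have "\<dots> \<le> sqrt (?q u0 u1 u2 * ?q v0 v1 v2)" using cs by (rule real_sqrt_le_mono)
    finally show ?thesis by (simp add: real_sqrt_mult)
  qed
  then have "?q (u0 + v0) (u1 + v1) (u2 + v2) \<le> (sqrt (?q u0 u1 u2) + sqrt (?q v0 v1 v2))^2"
    using exp[of 1] psd[of u0 u1 u2] psd[of v0 v1 v2] by (simp add: power2_sum)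
  then have "sqrt (?q (u0 + v0) (u1 + v1) (u2 + v2)) \<le> sqrt ((sqrt (?q u0 u1 u2) + sqrt (?q v0 v1 v2))^2)"
    by (rule real_sqrt_le_mono)
  also have "\<dots> = sqrt (?q u0 u1 u2) + sqrt (?q v0 v1 v2)" using psd[of u0 u1 u2] psd[of v0 v1 v2] by simp
  finally show ?thesis .
qed


theorem corollary1:
  fixes \<Omega> :: "'w measure" and X :: "'w \<Rightarrow> real" and M :: "'w \<Rightarrow> nat"
    and I :: "real set" and k :: "real \<Rightarrow> real \<Rightarrow> real"
    and P :: "'t \<Rightarrow> real measure" and \<Theta> :: "'t set"
    and \<theta>star \<theta>inf :: 't and \<epsilon> :: real
  assumes prob: "prob_space \<Omega>"
    and X_meas: "X \<in> borel_measurable \<Omega>"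
    and M_meas: "M \<in> measurable \<Omega> (count_space UNIV)"
    and M_vals: "\<forall>\<omega>\<in>space \<Omega>. M \<omega> \<in> {0, 1}"
    and I_meas: "I \<in> sets borel"
    and trunc: "AE \<omega> in \<Omega>. real_cond_exp \<Omega> (vimage_algebra (space \<Omega>) X borel)
                    (indicator {\<omega>\<in>space \<Omega>. M \<omega> = 0}) \<omega> = indicator I (X \<omega>)"
    and eps_def: "\<epsilon> = measure \<Omega> {\<omega>\<in>space \<Omega>. M \<omega> = 1}"
    and eps_lt: "\<epsilon> < 1"
    and k_meas: "case_prod k \<in> borel_measurable (borel \<Otimes>\<^sub>M borel)"
    and k_pd: "pos_def_kernel k"
    and k_bdd: "\<forall>x y. \<bar>k x y\<bar> \<le> 1"
    and k_char: "characteristic_kernel k"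
    and model: "\<forall>\<theta>\<in>\<Theta>. borel_prob (P \<theta>)"
    and star: "\<theta>star \<in> \<Theta>" "distr \<Omega> borel X = P \<theta>star"
    and argmin: "\<theta>inf \<in> \<Theta>"
      "\<forall>\<theta>\<in>\<Theta>. (mmd k (P \<theta>inf) (distr (uniform_measure \<Omega> {\<omega>\<in>space \<Omega>. M \<omega> = 0}) borel X))\<^sup>2
                  \<le> (mmd k (P \<theta>) (distr (uniform_measure \<Omega> {\<omega>\<in>space \<Omega>. M \<omega> = 0}) borel X))\<^sup>2"
  shows "mmd k (P \<theta>inf) (P \<theta>star) \<le> 4 * \<epsilon>"
  proof -
  interpret O: prob_space \<Omega> by (rule prob)
  note [measurable] = X_meas M_meas
  have ksym: "\<And>x y. k x y = k y x" using k_pd unfolding pos_def_kernel_def by blast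
  have kb: "\<And>x y. \<bar>k x y\<bar> \<le> 1" using k_bdd by blast
  define S0 where "S0 = {\<omega>\<in>space \<Omega>. M \<omega> = 0}"
  define S1 where "S1 = {\<omega>\<in>space \<Omega>. M \<omega> = 1}"
  have S0m[measurable]: "S0 \<in> sets \<Omega>" unfolding S0_def by measurable
  have S1m[measurable]: "S1 \<in> sets \<Omega>" unfolding S1_def by measurable
  define p where "p = measure \<Omega> S0"
  have disj: "S0 \<inter> S1 = {}" by (auto simp: S0_def S1_def)
  have un: "S0 \<union> S1 = space \<Omega>" using M_vals by (auto simp: S0_def S1_def)
  have "measure \<Omega> (S0 \<union> S1) = p + \<epsilon>"
    unfolding p_def eps_def S1_def[symmetric] using disj by (intro O.finite_measure_Union) auto
  then have pe: "p + \<epsilon> = 1" using un O.prob_space by simp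
  have eps0: "0 \<le> \<epsilon>" by (simp add: eps_def)
  have ppos: "0 < p" using pe eps_lt by simp
  define Q where "Q = distr \<Omega> borel X"
  define Q0 where "Q0 = distr (uniform_measure \<Omega> S0) borel X"
  define Q1 where "Q1 = (if \<epsilon> > 0 then distr (uniform_measure \<Omega> S1) borel X else Q0)"
  define R where "R = P \<theta>inf"
  have unif_prob: "prob_space (distr (uniform_measure \<Omega> S) borel X)" if "S \<in> sets \<Omega>" "measure \<Omega> S > 0" for S
  proof -
    have "prob_space (uniform_measure \<Omega> S)"
      using that by (intro prob_space_uniform_measure) (auto simp: O.emeasure_eq_measure)
    moreover have "X \<in> measurable (uniform_measure \<Omega> S) borel"
      using X_meas measurable_cong_sets[OF sets_uniform_measure refl] by blast
    ultimately show ?thesis by (rule prob_space.prob_space_distr)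
  qed
  have Qp: "prob_space Q" "sets Q = sets borel" unfolding Q_def by (auto intro: O.prob_space_distr)
  have Q0p: "prob_space Q0" "sets Q0 = sets borel" unfolding Q0_def using unif_prob[OF S0m] ppos p_def by auto
  have Q1p: "prob_space Q1" "sets Q1 = sets borel"
    unfolding Q1_def using unif_prob[OF S1m] Q0p unfolding eps_def S1_def by auto
  have Rp: "prob_space R" "sets R = sets borel" using model argmin(1) unfolding R_def borel_prob_def by auto
  have Xu: "X \<in> measurable (uniform_measure \<Omega> S) borel" for S
    using X_meas measurable_cong_sets[OF sets_uniform_measure refl] by blast
  have ID: "(\<integral>y. g y \<partial>Q) = (1 - \<epsilon>) * (\<integral>y. g y \<partial>Q0) + \<epsilon> * (\<integral>y. g y \<partial>Q1)"
    if gm: "g \<in> borel_measurable borel" and gb: "\<And>y. \<bar>g y\<bar> \<le> 1" for g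
  proof -
    have gX[measurable]: "(\<lambda>\<omega>. g (X \<omega>)) \<in> borel_measurable \<Omega>" using gm by measurable
    have int: "integrable \<Omega> (\<lambda>\<omega>. indicator S \<omega> * g (X \<omega>))" if "S \<in> sets \<Omega>" for S
      using gb that by (intro O.integrable_const_bound[where B=1]) (auto simp: indicator_def)
    have I0: "(\<integral>y. g y \<partial>Q0) = (\<integral>\<omega>. indicator S0 \<omega> * g (X \<omega>) \<partial>\<Omega>) / p"
    proof -
      have "(\<integral>y. g y \<partial>Q0) = (\<integral>\<omega>. g (X \<omega>) \<partial>uniform_measure \<Omega> S0)"
        unfolding Q0_def by (rule integral_distr[OF Xu gm])
      also have "\<dots> = (\<integral>\<omega>. indicator S0 \<omega> * g (X \<omega>) \<partial>\<Omega>) / p"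
        unfolding p_def using ppos p_def by (intro integral_unif) (auto intro: O.finite_measure_axioms)
      finally show ?thesis .
    qed
    have "(\<integral>y. g y \<partial>Q) = (\<integral>\<omega>. g (X \<omega>) \<partial>\<Omega>)"
      unfolding Q_def by (rule integral_distr[OF X_meas gm])
    also have "\<dots> = (\<integral>\<omega>. indicator S0 \<omega> * g (X \<omega>) + indicator S1 \<omega> * g (X \<omega>) \<partial>\<Omega>)"
    proof (rule Bochner_Integration.integral_cong[OF refl])
      fix \<omega> assume "\<omega> \<in> space \<Omega>"
      then show "g (X \<omega>) = indicator S0 \<omega> * g (X \<omega>) + indicator S1 \<omega> * g (X \<omega>)"
        using un disj by (auto simp: indicator_def)
    qed
    also have "\<dots> = (\<integral>\<omega>. indicator S0 \<omega> * g (X \<omega>) \<partial>\<Omega>) + (\<integral>\<omega>. indicator S1 \<omega> * g (X \<omega>) \<partial>\<Omega>)"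
      by (rule Bochner_Integration.integral_add) (auto intro: int)
    also have "\<dots> = (1 - \<epsilon>) * (\<integral>y. g y \<partial>Q0) + \<epsilon> * (\<integral>y. g y \<partial>Q1)"
    proof (cases "\<epsilon> > 0")
      case True
      have "(\<integral>y. g y \<partial>Q1) = (\<integral>\<omega>. g (X \<omega>) \<partial>uniform_measure \<Omega> S1)"
        unfolding Q1_def using True by (simp add: integral_distr[OF Xu gm])
      also have "\<dots> = (\<integral>\<omega>. indicator S1 \<omega> * g (X \<omega>) \<partial>\<Omega>) / \<epsilon>"
        unfolding eps_def S1_def[symmetric] using True eps_def S1_def
        by (intro integral_unif) (auto intro: O.finite_measure_axioms)
      finally have h1: "\<epsilon> * (\<integral>y. g y \<partial>Q1) = (\<integral>\<omega>. indicator S1 \<omega> * g (X \<omega>) \<partial>\<Omega>)"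
        using True by simp
      have h0: "p * (\<integral>y. g y \<partial>Q0) = (\<integral>\<omega>. indicator S0 \<omega> * g (X \<omega>) \<partial>\<Omega>)"
        using I0 ppos by simp
      have hp: "1 - \<epsilon> = p" using pe by simp
      show ?thesis by (simp only: hp h0 h1)
    next
      case False
      then have e0: "\<epsilon> = 0" using eps0 by simp
      have "S1 \<in> null_sets \<Omega>" using e0 unfolding eps_def S1_def[symmetric]
        by (simp add: O.emeasure_eq_measure null_sets_def)
      then have "AE \<omega> in \<Omega>. \<omega> \<notin> S1" by (rule AE_not_in)
      then have "(\<integral>\<omega>. indicator S1 \<omega> * g (X \<omega>) \<partial>\<Omega>) = (\<integral>\<omega>. 0 \<partial>\<Omega>)"
        by (intro integral_cong_AE) (auto simp: indicator_def)
      then show ?thesis using I0 e0 ppos pe by simp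
    qed
    finally show ?thesis .
  qed
  have kym: "k y \<in> borel_measurable borel" for y
  proof -
    have "(\<lambda>z. (y, z)) \<in> measurable borel (borel \<Otimes>\<^sub>M borel)" by measurable
    from measurable_comp[OF this k_meas] show ?thesis by (simp add: o_def)
  qed
  have inner_m: "(\<lambda>y. \<integral>z. k y z \<partial>B) \<in> borel_measurable A"
    if "prob_space B" "sets B = sets borel" "sets A = sets borel" for A B
    by (subst measurable_cong_sets[OF that(3) refl])
      (rule inner_meas[OF k_meas prob_space.finite_measure[OF that(1)] that(2)])
  have inner_b: "\<bar>\<integral>z. k y z \<partial>B\<bar> \<le> 1" if "prob_space B" "sets B = sets borel" for B y
  proof -
    have "k y \<in> borel_measurable B"
      by (subst measurable_cong_sets[OF that(2) refl]) (rule kym)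
    then show ?thesis by (rule int_bound1[OF that(1) _ kb])
  qed
  have inner_int: "integrable A (\<lambda>y. \<integral>z. k y z \<partial>B)"
    if "prob_space A" "sets A = sets borel" "prob_space B" "sets B = sets borel" for A B
  proof -
    interpret A: prob_space A by (rule that(1))
    show ?thesis using inner_m[OF that(3,4,2)] inner_b[OF that(3,4)]
      by (intro A.integrable_const_bound[where B=1]) auto
  qed
  have LinR: "kB k A Q = (1 - \<epsilon>) * kB k A Q0 + \<epsilon> * kB k A Q1"
    if "prob_space A" "sets A = sets borel" for A
  proof -
    have "kB k A Q = (\<integral>y. (1 - \<epsilon>) * (\<integral>z. k y z \<partial>Q0) + \<epsilon> * (\<integral>z. k y z \<partial>Q1) \<partial>A)"
      unfolding kB_def using ID[OF kym kb] by simp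
    also have "\<dots> = (1 - \<epsilon>) * kB k A Q0 + \<epsilon> * kB k A Q1"
      unfolding kB_def using inner_int[OF that Q0p] inner_int[OF that Q1p] by simp
    finally show ?thesis .
  qed
  have LinL: "kB k Q B = (1 - \<epsilon>) * kB k Q0 B + \<epsilon> * kB k Q1 B"
    if "prob_space B" "sets B = sets borel" for B
    unfolding kB_def using inner_m[OF that, of borel] inner_b[OF that] by (intro ID) auto
  define GRR where "GRR = kB k R R"
  define G00 where "G00 = kB k Q0 Q0"
  define G11 where "G11 = kB k Q1 Q1"
  define GR0 where "GR0 = kB k R Q0"
  define GR1 where "GR1 = kB k R Q1"
  define G01 where "G01 = kB k Q0 Q1"
  have sym: "kB k A B = kB k B A" if "prob_space A" "sets A = sets borel" "prob_space B" "sets B = sets borel" for A B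
    unfolding kB_def by (rule B_sym[OF k_meas ksym kb that])
  have mmdsq: "mmd_sq k A B = kB k A A - 2 * kB k A B + kB k B B" for A B
    unfolding mmd_sq_def kB_def ..
  define Pv where "Pv = (\<lambda>i::nat. if i = 0 then R else if i = 1 then Q0 else Q1)"
  have PSD: "0 \<le> qf GRR G00 G11 GR0 GR1 G01 a b c" for a b c
  proof -
    define cc where "cc = (\<lambda>i::nat. if i = 0 then a else if i = 1 then b else c)"
    have "0 \<le> (\<Sum>i<3. \<Sum>j<3. cc i * cc j * kB k (Pv i) (Pv j))"
      by (rule psd[OF k_pd k_meas kb]) (auto simp: Pv_def Rp Q0p Q1p)
    also have "\<dots> = qf GRR G00 G11 GR0 GR1 G01 a b c"
      using sym[OF Rp Q0p] sym[OF Rp Q1p] sym[OF Q0p Q1p]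
      by (simp add: numeral_3_eq_3 cc_def Pv_def qf_def GRR_def G00_def G11_def GR0_def GR1_def G01_def algebra_simps)
    finally show ?thesis .
  qed
  have QQ: "kB k Q Q = (1 - \<epsilon>) * ((1 - \<epsilon>) * G00 + \<epsilon> * G01) + \<epsilon> * ((1 - \<epsilon>) * G01 + \<epsilon> * G11)"
    using LinL[OF Qp] LinR[OF Q0p] LinR[OF Q1p] sym[OF Q0p Q1p]
    by (simp add: G00_def G11_def G01_def)
  have e1: "mmd_sq k R Q = qf GRR G00 G11 GR0 GR1 G01 (1 + 0) (-1 + \<epsilon>) (0 + - \<epsilon>)"
    unfolding mmdsq QQ LinR[OF Rp] qf_def GRR_def GR0_def GR1_def
    by (simp add: algebra_simps power2_eq_square)
  have e2: "mmd_sq k R Q0 = qf GRR G00 G11 GR0 GR1 G01 1 (-1) 0"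
    unfolding mmdsq qf_def GRR_def GR0_def G00_def by simp
  have e3: "mmd_sq k Q Q0 = qf GRR G00 G11 GR0 GR1 G01 0 \<epsilon> (- \<epsilon>)"
    unfolding mmdsq QQ LinL[OF Q0p] qf_def
    using sym[OF Q0p Q1p] by (simp add: G00_def G01_def G11_def algebra_simps power2_eq_square)
  have bnd: "qf GRR G00 G11 GR0 GR1 G01 0 \<epsilon> (- \<epsilon>) \<le> (2 * \<epsilon>)^2"
  proof -
    have "\<bar>G00\<bar> \<le> 1" "\<bar>G11\<bar> \<le> 1" "\<bar>G01\<bar> \<le> 1"
      unfolding G00_def G11_def G01_def using kB_bound[OF k_meas kb] Q0p Q1p by auto
    then have "G00 - 2 * G01 + G11 \<le> 4" by linarith
    then have "\<epsilon>^2 * (G00 - 2 * G01 + G11) \<le> \<epsilon>^2 * 4" by (intro mult_left_mono) auto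
    then show ?thesis unfolding qf_def by (simp add: algebra_simps power2_eq_square)
  qed
  have PQ: "P \<theta>star = Q" unfolding Q_def using star(2) by simp
  have "(mmd k R Q0)^2 \<le> (mmd k Q Q0)^2"
    using argmin(2) star(1) PQ unfolding R_def Q0_def S0_def by auto
  then have u: "qf GRR G00 G11 GR0 GR1 G01 1 (-1) 0 \<le> qf GRR G00 G11 GR0 GR1 G01 0 \<epsilon> (- \<epsilon>)"
    unfolding mmd_def e2 e3 using PSD by simp
  have sq: "sqrt ((2 * \<epsilon>)^2) = 2 * \<epsilon>"
    using real_sqrt_abs[of "2 * \<epsilon>"] eps0 by (simp only: abs_of_nonneg)
  have su: "sqrt (qf GRR G00 G11 GR0 GR1 G01 1 (-1) 0) \<le> 2 * \<epsilon>"
    using real_sqrt_le_mono[OF order.trans[OF u bnd]] unfolding sq .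
  have sv: "sqrt (qf GRR G00 G11 GR0 GR1 G01 0 \<epsilon> (- \<epsilon>)) \<le> 2 * \<epsilon>"
    using real_sqrt_le_mono[OF bnd] unfolding sq .
  have "mmd k R Q \<le> sqrt (qf GRR G00 G11 GR0 GR1 G01 1 (-1) 0) + sqrt (qf GRR G00 G11 GR0 GR1 G01 0 \<epsilon> (- \<epsilon>))"
    unfolding mmd_def e1 by (rule tri[OF PSD])
  then show ?thesis using su sv PQ unfolding R_def by simp
qed

end
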